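(* Let $N\ge2$ and $T\ge1$ be integers. For a sequence $s=(s(1),\dots,s(T))\in\{0,1\}^T$ define $$F(s)=\frac1T\sum_{t=1}^T\Big(1+\sum_{\ell=1}^{t}\prod_{j=\ell}^{t}\Big(1-\frac{s(j)}{N}\Big)\Big).$$ Call $s$ a consecutive blocking sequence (CBS) if its zeros are nonempty and occupy a set of consecutive positions. For a CBS $s$, let $L(s)$ be the number of ones before its block of zeros and $R(s)$ the number of ones after it. Then, for every $m$ with $1\le m\le T$, among all $s\in\{0,1\}^T$ with exactly $m$ zeros, $F$ is maximized by a CBS $s$ with $|L(s)-R(s)|\le1$.
   Context: $F(s)$ is the time-averaged expected age of one user (measured at the end of each slot, starting from age $1$) when a BS schedules that user with probability $1/N$ in every slot and $s(j)=0$ means the user is blocked in slot $j$. *)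

theory Defs
  imports Main "HOL.Real"
begin

text \<open>A sequence s in {0,1}^T is a function nat => nat, relevant on positions 1..T.\<close>

definition binseq :: "nat \<Rightarrow> (nat \<Rightarrow> nat) \<Rightarrow> bool" where
  "binseq T s \<longleftrightarrow> (\<forall>j\<in>{1..T}. s j = 0 \<or> s j = 1)"

definition avgAge :: "nat \<Rightarrow> nat \<Rightarrow> (nat \<Rightarrow> nat) \<Rightarrow> real" where
  "avgAge N T s = (1 / real T) *
     (\<Sum>t=1..T. 1 + (\<Sum>l=1..t. \<Prod>j=l..t. (1 - real (s j) / real N)))"

definition zeros :: "nat \<Rightarrow> (nat \<Rightarrow> nat) \<Rightarrow> nat set" where
  "zeros T s = {j \<in> {1..T}. s j = 0}"

definition is_CBS :: "nat \<Rightarrow> (nat \<Rightarrow> nat) \<Rightarrow> bool" where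
  "is_CBS T s \<longleftrightarrow> binseq T s \<and> zeros T s \<noteq> {} \<and> (\<exists>a b. zeros T s = {a..b})"

definition Lcnt :: "nat \<Rightarrow> (nat \<Rightarrow> nat) \<Rightarrow> nat" where
  "Lcnt T s = card {j \<in> {1..T}. s j = 1 \<and> j < Min (zeros T s)}"

definition Rcnt :: "nat \<Rightarrow> (nat \<Rightarrow> nat) \<Rightarrow> nat" where
  "Rcnt T s = card {j \<in> {1..T}. s j = 1 \<and> j > Max (zeros T s)}"

end

theory Submission imports Defs begin


definition sig :: "(nat \<Rightarrow> nat) \<Rightarrow> nat \<Rightarrow> nat" where
  "sig s p = (\<Sum>j\<in>{1..<p}. s j)"

definition Kq :: "real \<Rightarrow> nat \<Rightarrow> nat \<Rightarrow> real" where
  "Kq q a b = q ^ (if a \<le> b then b - a else a - b)"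

lemma Kq_sym: "Kq q a b = Kq q b a"
  unfolding Kq_def by auto

lemma Kq_diag: "Kq q a a = 1"
  unfolding Kq_def by auto

lemma Kq_bounds: "0 \<le> q \<Longrightarrow> q \<le> 1 \<Longrightarrow> 0 \<le> Kq q a b \<and> Kq q a b \<le> 1"
  unfolding Kq_def by (auto intro: power_le_one)

lemma prod_pow:
  assumes "binseq T s" "1 \<le> l" "t \<le> T" "N > 0"
  shows "(\<Prod>j=l..t. 1 - real (s j) / real N) = (1 - 1 / real N) ^ (\<Sum>j=l..t. s j)"
proof -
  have "(\<Prod>j=l..t. 1 - real (s j) / real N) = (\<Prod>j=l..t. (1 - 1 / real N) ^ s j)"
  proof (rule prod.cong)
    fix j assume "j \<in> {l..t}"
    then have "s j = 0 \<or> s j = 1" using assms unfolding binseq_def by auto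
    then show "1 - real (s j) / real N = (1 - 1 / real N) ^ s j" by auto
  qed simp
  then show ?thesis by (simp add: power_sum)
qed

lemma sum_sig:
  assumes "1 \<le> l" "l \<le> Suc t"
  shows "(\<Sum>j=l..t. s j) = sig s (Suc t) - sig s l" and "sig s l \<le> sig s (Suc t)"
proof -
  have "sig s l + (\<Sum>j=l..<Suc t. s j) = sig s (Suc t)"
    unfolding sig_def using sum.atLeastLessThan_concat[of 1 l "Suc t" s] assms by simp
  moreover have "{l..t} = {l..<Suc t}" by auto
  ultimately show "(\<Sum>j=l..t. s j) = sig s (Suc t) - sig s l" "sig s l \<le> sig s (Suc t)"
    by auto
qed

lemma symsum:
  fixes f :: "nat \<Rightarrow> nat \<Rightarrow> real"
  assumes "\<And>l p. f l p = f p l" "\<And>l. f l l = 1"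
  shows "(\<Sum>l=1..Suc n. \<Sum>p=1..Suc n. f l p) = real (Suc n) + 2 * (\<Sum>t=1..n. \<Sum>l=1..t. f l (Suc t))"
proof (induction n)
  case 0
  then show ?case using assms by simp
next
  case (Suc n)
  have "(\<Sum>l=1..Suc (Suc n). \<Sum>p=1..Suc (Suc n). f l p)
      = (\<Sum>l=1..Suc n. \<Sum>p=1..Suc n. f l p) + (\<Sum>l=1..Suc n. f l (Suc (Suc n)))
        + (\<Sum>p=1..Suc n. f (Suc (Suc n)) p) + 1"
    using assms by (simp add: sum.distrib)
  also have "(\<Sum>p=1..Suc n. f (Suc (Suc n)) p) = (\<Sum>l=1..Suc n. f l (Suc (Suc n)))"
    using assms(1) by metis
  finally show ?case using Suc by simp
qed

lemma regroup:
  fixes f :: "nat \<Rightarrow> nat \<Rightarrow> real" and \<sigma> :: "nat \<Rightarrow> nat"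
  assumes "finite P" "finite A" "\<sigma> ` P \<subseteq> A"
  shows "(\<Sum>l\<in>P. \<Sum>p\<in>P. f (\<sigma> l) (\<sigma> p)) =
         (\<Sum>a\<in>A. \<Sum>b\<in>A. real (card {l\<in>P. \<sigma> l = a}) * real (card {l\<in>P. \<sigma> l = b}) * f a b)"
proof -
  have g: "(\<Sum>l\<in>P. G (\<sigma> l)) = (\<Sum>a\<in>A. real (card {l\<in>P. \<sigma> l = a}) * G a)" for G :: "nat \<Rightarrow> real"
  proof -
    have "(\<Sum>l\<in>P. G (\<sigma> l)) = (\<Sum>a\<in>A. \<Sum>l\<in>{x. x\<in>P \<and> \<sigma> x = a}. G (\<sigma> l))"
      using sum.group[OF assms, of "\<lambda>l. G (\<sigma> l)"] by simp
    also have "\<dots> = (\<Sum>a\<in>A. real (card {l\<in>P. \<sigma> l = a}) * G a)"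
      by (rule sum.cong) auto
    finally show ?thesis .
  qed
  have "(\<Sum>l\<in>P. \<Sum>p\<in>P. f (\<sigma> l) (\<sigma> p)) = (\<Sum>l\<in>P. \<Sum>b\<in>A. real (card {l\<in>P. \<sigma> l = b}) * f (\<sigma> l) b)"
    using g by simp
  also have "\<dots> = (\<Sum>b\<in>A. \<Sum>l\<in>P. real (card {l\<in>P. \<sigma> l = b}) * f (\<sigma> l) b)"
    by (rule sum.swap)
  also have "\<dots> = (\<Sum>b\<in>A. \<Sum>a\<in>A. real (card {l\<in>P. \<sigma> l = a}) * (real (card {l\<in>P. \<sigma> l = b}) * f a b))"
    apply (rule sum.cong[OF refl])
    subgoal for b using g[of "\<lambda>a. real (card {l\<in>P. \<sigma> l = b}) * f a b"] by (simp add: mult.assoc)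
    done
  also have "\<dots> = (\<Sum>a\<in>A. \<Sum>b\<in>A. real (card {l\<in>P. \<sigma> l = a}) * real (card {l\<in>P. \<sigma> l = b}) * f a b)"
    by (subst sum.swap) (simp add: mult.assoc)
  finally show ?thesis .
qed


lemma expand:
  fixes g :: "nat \<Rightarrow> real" and K :: "nat \<Rightarrow> nat \<Rightarrow> real"
  assumes "\<And>a b. K a b = K b a"
  shows "(\<Sum>a\<in>A. \<Sum>b\<in>A. (1 + g a) * (1 + g b) * K a b) =
         (\<Sum>a\<in>A. \<Sum>b\<in>A. K a b) + 2 * (\<Sum>a\<in>A. g a * (\<Sum>b\<in>A. K a b))
         + (\<Sum>a\<in>A. \<Sum>b\<in>A. g a * g b * K a b)"
proof -
  have e: "(1 + g a) * (1 + g b) * K a b = K a b + g a * K a b + g b * K a b + g a * g b * K a b" for a b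
    by (simp add: algebra_simps)
  have s1: "(\<Sum>a\<in>A. \<Sum>b\<in>A. g b * K a b) = (\<Sum>a\<in>A. g a * (\<Sum>b\<in>A. K a b))"
    apply (subst sum.swap)
    apply (simp add: sum_distrib_left)
    using assms by (metis (no_types, lifting) sum.cong)
  have s2: "(\<Sum>a\<in>A. \<Sum>b\<in>A. g a * K a b) = (\<Sum>a\<in>A. g a * (\<Sum>b\<in>A. K a b))"
    by (simp add: sum_distrib_left)
  show ?thesis
    unfolding e sum.distrib s1 s2 by simp
qed

lemma quad_bound:
  fixes K :: "nat \<Rightarrow> nat \<Rightarrow> real" and h :: "nat \<Rightarrow> nat"
  assumes fin: "finite A" and cA: "c \<in> A"
    and sym: "\<And>a b. K a b = K b a" and Kb: "\<And>a b. 0 \<le> K a b \<and> K a b \<le> 1" and Kc: "K c c = 1"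
    and phi: "\<And>a. a \<in> A \<Longrightarrow> (\<Sum>b\<in>A. K a b) \<le> (\<Sum>b\<in>A. K c b)"
    and h1: "\<And>a. a \<in> A \<Longrightarrow> h a \<ge> 1" and hs: "(\<Sum>a\<in>A. h a) = card A + m"
  shows "(\<Sum>a\<in>A. \<Sum>b\<in>A. real (h a) * real (h b) * K a b) \<le>
         (\<Sum>a\<in>A. \<Sum>b\<in>A. real (if a = c then 1 + m else 1) * real (if b = c then 1 + m else 1) * K a b)"
proof -
  define g where "g a = real (h a) - 1" for a
  define g' where "g' a = (if a = c then real m else 0)" for a
  have hg: "real (h a) = 1 + g a" for a unfolding g_def by simp
  have hg': "real (if a = c then 1 + m else 1) = 1 + g' a" for a unfolding g'_def by simp
  have g0: "a \<in> A \<Longrightarrow> g a \<ge> 0" for a using h1 unfolding g_def by fastforce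
  have gs: "(\<Sum>a\<in>A. g a) = real m"
  proof -
    have "(\<Sum>a\<in>A. real (h a)) = real (card A) + real m" using hs
      by (metis of_nat_add of_nat_sum)
    then show ?thesis unfolding g_def by (simp add: sum_subtractf)
  qed
  define \<phi> where "\<phi> a = (\<Sum>b\<in>A. K a b)" for a
  have t1: "(\<Sum>a\<in>A. g a * \<phi> a) \<le> real m * \<phi> c"
  proof -
    have "(\<Sum>a\<in>A. g a * \<phi> a) \<le> (\<Sum>a\<in>A. g a * \<phi> c)"
      by (rule sum_mono) (use g0 phi in \<open>auto simp: \<phi>_def intro: mult_left_mono\<close>)
    also have "\<dots> = real m * \<phi> c" using gs by (simp add: sum_distrib_right[symmetric])
    finally show ?thesis .
  qed
  have t2: "(\<Sum>a\<in>A. \<Sum>b\<in>A. g a * g b * K a b) \<le> real m * real m"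
  proof -
    have "(\<Sum>a\<in>A. \<Sum>b\<in>A. g a * g b * K a b) \<le> (\<Sum>a\<in>A. \<Sum>b\<in>A. g a * g b)"
      apply (rule sum_mono)+
      using g0 Kb by (simp add: mult_left_le)
    also have "\<dots> = (\<Sum>a\<in>A. g a) * (\<Sum>b\<in>A. g b)" by (simp add: sum_product)
    finally show ?thesis using gs by simp
  qed
  have gm: "g' a * x = (if a = c then real m * x else 0)" for a x unfolding g'_def by simp
  have u1: "(\<Sum>a\<in>A. g' a * \<phi> a) = real m * \<phi> c"
    using fin cA by (simp add: gm sum.delta)
  have u2: "(\<Sum>a\<in>A. \<Sum>b\<in>A. g' a * g' b * K a b) = real m * real m"
  proof -
    have "(\<Sum>a\<in>A. \<Sum>b\<in>A. g' a * g' b * K a b) = (\<Sum>a\<in>A. g' a * (\<Sum>b\<in>A. g' b * K a b))"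
      by (simp add: sum_distrib_left mult.assoc)
    also have "\<dots> = real m * (real m * K c c)"
      using fin cA by (simp add: gm sum.delta)
    finally show ?thesis using Kc by simp
  qed
  show ?thesis
    unfolding hg hg' expand[of K, OF sym] using t1 t2 u1 u2 unfolding \<phi>_def by linarith
qed


lemma Kq_Suc: "Kq q (Suc a) (Suc b) = Kq q a b" unfolding Kq_def by auto

lemma phi_step:
  assumes "a < k"
  shows "(\<Sum>b=0..k. Kq q (Suc a) b) = q ^ Suc a + (\<Sum>b=0..k. Kq q a b) - q ^ (k - a)"
proof -
  obtain k' where k: "k = Suc k'" using assms by (cases k) auto
  have "(\<Sum>b=0..k. Kq q (Suc a) b) = Kq q (Suc a) 0 + (\<Sum>b=Suc 0..Suc k'. Kq q (Suc a) b)"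
    unfolding k by (simp add: sum.atLeast_Suc_atMost)
  also have "(\<Sum>b=Suc 0..Suc k'. Kq q (Suc a) b) = (\<Sum>b=0..k'. Kq q a b)"
    by (simp only: sum.shift_bounds_cl_Suc_ivl Kq_Suc)
  also have "(\<Sum>b=0..k. Kq q a b) = (\<Sum>b=0..k'. Kq q a b) + Kq q a k"
    unfolding k by simp
  moreover have "Kq q (Suc a) 0 = q ^ Suc a" unfolding Kq_def by simp
  moreover have "Kq q a k = q ^ (k - a)" unfolding Kq_def using assms by simp
  ultimately show ?thesis by simp
qed

lemma phi_max:
  assumes q0: "0 \<le> q" and q1: "q \<le> 1" and ak: "a \<le> k"
  shows "(\<Sum>b=0..k. Kq q a b) \<le> (\<Sum>b=0..k. Kq q (k div 2) b)"
proof -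
  define \<phi> where "\<phi> a = (\<Sum>b=0..k. Kq q a b)" for a
  have up: "\<phi> n \<le> \<phi> (Suc n)" if "2 * n + 1 \<le> k" for n
  proof -
    have "q ^ (k - n) \<le> q ^ Suc n" using that q0 q1 by (intro power_decreasing) auto
    then show ?thesis unfolding \<phi>_def using phi_step[of n k q] that by simp
  qed
  have down: "\<phi> (Suc n) \<le> \<phi> n" if "k \<le> 2 * n + 1" "n < k" for n
  proof -
    have "q ^ Suc n \<le> q ^ (k - n)" using that q0 q1 by (intro power_decreasing) auto
    then show ?thesis unfolding \<phi>_def using phi_step[of n k q] that by simp
  qed
  show ?thesis
  proof (cases "a \<le> k div 2")
    case True
    have "\<phi> a \<le> \<phi> (k div 2)"
      using True
    proof (induction rule: inc_induct)
      case (step n)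
      then show ?case using up[of n] by linarith
    qed simp
    then show ?thesis unfolding \<phi>_def .
  next
    case False
    then have "k div 2 \<le> a" by simp
    then have "\<phi> a \<le> \<phi> (k div 2)"
      using ak
    proof (induction rule: dec_induct)
      case (step n)
      then show ?case using down[of n] by linarith
    qed simp
    then show ?thesis unfolding \<phi>_def .
  qed
qed

lemma sig_one: "sig s (Suc 0) = 0" unfolding sig_def by simp

lemma sig_Suc: "1 \<le> n \<Longrightarrow> sig s (Suc n) = sig s n + s n"
  unfolding sig_def by simp

lemma sig_ivt:
  assumes "binseq T s" "1 \<le> n" "n \<le> T + 1" "a \<le> sig s n"
  shows "\<exists>l\<in>{1..n}. sig s l = a"
  using assms(2-4)
proof (induction n rule: dec_induct)
  case base
  then show ?case using sig_one by force
next
  case (step n)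
  have sn: "s n = 0 \<or> s n = 1" using assms(1) step unfolding binseq_def by auto
  show ?case
  proof (cases "a \<le> sig s n")
    case True
    then show ?thesis using step by force
  next
    case False
    then have "a = sig s (Suc n)" using step sn sig_Suc[of n s] by auto
    then show ?thesis using step by force
  qed
qed

lemma sig_mono: "1 \<le> l \<Longrightarrow> l \<le> p \<Longrightarrow> sig s l \<le> sig s p"
  unfolding sig_def by (rule sum_mono2) auto

lemma sig_total:
  assumes "binseq T s"
  shows "sig s (Suc T) = T - card (zeros T s)"
proof -
  have "sig s (Suc T) = (\<Sum>j\<in>{1..T}. if s j = 1 then 1 else 0)"
    unfolding sig_def
    apply (rule sum.cong) using assms unfolding binseq_def by auto
  also have "\<dots> = card {j\<in>{1..T}. s j = 1}"
    by (simp add: sum.If_cases) (rule arg_cong[where f=card], auto)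
  also have "card {j\<in>{1..T}. s j = 1} = T - card (zeros T s)"
  proof -
    have "{1..T} = {j\<in>{1..T}. s j = 1} \<union> zeros T s" using assms unfolding binseq_def zeros_def by auto
    moreover have "{j\<in>{1..T}. s j = 1} \<inter> zeros T s = {}" unfolding zeros_def by auto
    ultimately have "T = card {j\<in>{1..T}. s j = 1} + card (zeros T s)"
      by (metis card_Un_disjoint card_atLeastAtMost diff_Suc_1 finite_Un finite_atLeastAtMost)
    then show ?thesis by simp
  qed
  finally show ?thesis .
qed


lemma avg_formula:
  assumes bs: "binseq T s" and N: "N \<ge> 2"
  shows "real T * avgAge N T s = real T +
     ((\<Sum>l=1..Suc T. \<Sum>p=1..Suc T. Kq (1 - 1 / real N) (sig s l) (sig s p)) - real (Suc T)) / 2"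
proof -
  define q where "q = 1 - 1 / real N"
  define X where "X = (\<Sum>t=1..T. \<Sum>l=1..t. \<Prod>j=l..t. (1 - real (s j) / real N))"
  have TA: "real T * avgAge N T s = real T + X" if "T \<ge> 1"
    unfolding avgAge_def X_def using that by (simp add: sum.distrib)
  have TA0: "real T * avgAge N T s = real T + X" if "T = 0"
    unfolding avgAge_def X_def using that by simp
  have X: "X = (\<Sum>t=1..T. \<Sum>l=1..t. Kq q (sig s l) (sig s (Suc t)))"
    unfolding X_def
  proof (intro sum.cong refl)
    fix t l assume t: "t \<in> {1..T}" and l: "l \<in> {1..t}"
    have "(\<Prod>j=l..t. 1 - real (s j) / real N) = q ^ (\<Sum>j=l..t. s j)"
      unfolding q_def using prod_pow[OF bs, of l t N] t l N by auto
    also have "\<dots> = Kq q (sig s l) (sig s (Suc t))"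
      using sum_sig[of l t s] l unfolding Kq_def by auto
    finally show "(\<Prod>j=l..t. 1 - real (s j) / real N) = Kq q (sig s l) (sig s (Suc t))" .
  qed
  have S: "(\<Sum>l=1..Suc T. \<Sum>p=1..Suc T. Kq q (sig s l) (sig s p)) = real (Suc T) + 2 * X"
    unfolding X using symsum[of "\<lambda>l p. Kq q (sig s l) (sig s p)" T] Kq_sym Kq_diag by blast
  show ?thesis using TA TA0 S unfolding q_def by fastforce
qed

lemma card_sum_groups:
  assumes "finite P" "finite A" "\<sigma> ` P \<subseteq> A"
  shows "(\<Sum>a\<in>A. card {l\<in>P. \<sigma> l = a}) = card P"
  using sum.group[OF assms, of "\<lambda>_. (1::nat)"] by simp

definition sstar :: "nat \<Rightarrow> nat \<Rightarrow> nat \<Rightarrow> nat" where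
  "sstar c m j = (if c < j \<and> j \<le> c + m then 0 else 1)"

lemma sig_sstar:
  assumes "1 \<le> p"
  shows "sig (sstar c m) p = (if p \<le> c + 1 then p - 1 else if p \<le> c + m + 1 then c else p - 1 - m)"
  using assms
proof (induction p rule: dec_induct)
  case base
  then show ?case using sig_one by simp
next
  case (step n)
  then show ?case using sig_Suc[of n "sstar c m"] unfolding sstar_def by auto
qed


lemma hstar:
  assumes "c \<le> T - m" "m \<le> T" "a \<le> T - m"
  shows "card {l\<in>{1..Suc T}. sig (sstar c m) l = a} = (if a = c then 1 + m else 1)"
proof -
  consider "a < c" | "a = c" | "a > c" by linarith
  then show ?thesis
  proof cases
    case 1
    have "{l\<in>{1..Suc T}. sig (sstar c m) l = a} = {a+1}"
      using 1 assms by (auto simp: sig_sstar split: if_splits)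
    then show ?thesis using 1 by simp
  next
    case 2
    have "{l\<in>{1..Suc T}. sig (sstar c m) l = a} = {c+1..c+m+1}"
      using 2 assms by (auto simp: sig_sstar split: if_splits)
    then show ?thesis using 2 by simp
  next
    case 3
    have "{l\<in>{1..Suc T}. sig (sstar c m) l = a} = {a+m+1}"
      using 3 assms by (auto simp: sig_sstar split: if_splits)
    then show ?thesis using 3 by simp
  qed
qed


theorem lemma5:
  fixes N T m :: nat
  assumes "N \<ge> 2" and "T \<ge> 1" and "1 \<le> m" and "m \<le> T"
  shows "\<exists>s. is_CBS T s \<and> card (zeros T s) = m \<and>
           \<bar>int (Lcnt T s) - int (Rcnt T s)\<bar> \<le> 1 \<and>
           (\<forall>s'. binseq T s' \<and> card (zeros T s') = m \<longrightarrow> avgAge N T s' \<le> avgAge N T s)"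
proof -
  define k where "k = T - m"
  define c where "c = k div 2"
  define s where "s = sstar c m"
  define q where "q = 1 - 1 / real N"
  have ck: "c \<le> k" unfolding c_def by simp
  have cmT: "c + m \<le> T" using ck assms unfolding k_def by simp
  have bs: "binseq T s" unfolding binseq_def s_def sstar_def by auto
  have zs: "zeros T s = {c+1..c+m}" unfolding zeros_def s_def sstar_def using cmT by auto
  have cz: "card (zeros T s) = m" unfolding zs by simp
  have cbs: "is_CBS T s" unfolding is_CBS_def using bs zs assms by auto
  have mn: "Min (zeros T s) = c + 1"
    unfolding zs using assms by (intro Min_eqI) auto
  have mx: "Max (zeros T s) = c + m"
    unfolding zs using assms by (intro Max_eqI) auto
  have L: "Lcnt T s = c"
  proof -
    have "{j\<in>{1..T}. s j = 1 \<and> j < Min (zeros T s)} = {1..c}"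
      unfolding mn using cmT by (auto simp: s_def sstar_def)
    then show ?thesis unfolding Lcnt_def by simp
  qed
  have R: "Rcnt T s = k - c"
  proof -
    have "{j\<in>{1..T}. s j = 1 \<and> j > Max (zeros T s)} = {c+m+1..T}"
      unfolding mx using cmT by (auto simp: s_def sstar_def)
    then show ?thesis unfolding Rcnt_def k_def by simp
  qed
  have ab: "\<bar>int (Lcnt T s) - int (Rcnt T s)\<bar> \<le> 1"
    unfolding L R c_def by linarith
  have q0: "0 \<le> q" and q1: "q \<le> 1" unfolding q_def using assms by auto
  define P where "P = {1..Suc T}"
  define A where "A = {0..k}"
  have img: "sig t ` P \<subseteq> A" if "binseq T t" "card (zeros T t) = m" for t
  proof
    fix x assume "x \<in> sig t ` P"
    then obtain l where l: "l \<in> P" "x = sig t l" by auto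
    have "sig t l \<le> sig t (Suc T)" using l by (intro sig_mono) (auto simp: P_def)
    then show "x \<in> A" using sig_total[OF that(1)] that(2) l unfolding A_def k_def by simp
  qed
  have opt: "avgAge N T s' \<le> avgAge N T s" if bs': "binseq T s'" and cz': "card (zeros T s') = m" for s'
  proof -
    define h where "h a = card {l\<in>P. sig s' l = a}" for a
    have reg': "(\<Sum>l\<in>P. \<Sum>p\<in>P. Kq q (sig s' l) (sig s' p)) =
        (\<Sum>a\<in>A. \<Sum>b\<in>A. real (h a) * real (h b) * Kq q a b)"
      unfolding h_def by (rule regroup[OF _ _ img[OF bs' cz']]) (auto simp: P_def A_def)
    have reg: "(\<Sum>l\<in>P. \<Sum>p\<in>P. Kq q (sig s l) (sig s p)) =
        (\<Sum>a\<in>A. \<Sum>b\<in>A. real (card {l\<in>P. sig s l = a}) * real (card {l\<in>P. sig s l = b}) * Kq q a b)"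
      by (rule regroup[OF _ _ img[OF bs cz]]) (auto simp: P_def A_def)
    have hst: "card {l\<in>P. sig s l = a} = (if a = c then 1 + m else 1)" if "a \<in> A" for a
      unfolding P_def s_def using hstar[of c T m a] that ck assms unfolding A_def k_def by auto
    have reg2: "(\<Sum>l\<in>P. \<Sum>p\<in>P. Kq q (sig s l) (sig s p)) =
        (\<Sum>a\<in>A. \<Sum>b\<in>A. real (if a = c then 1 + m else 1) * real (if b = c then 1 + m else 1) * Kq q a b)"
      unfolding reg by (intro sum.cong refl) (simp add: hst)
    have h1: "h a \<ge> 1" if "a \<in> A" for a
    proof -
      have "a \<le> sig s' (Suc T)" using that sig_total[OF bs'] cz' unfolding A_def k_def by simp
      then obtain l where "l \<in> {1..Suc T}" "sig s' l = a" using sig_ivt[OF bs', of "Suc T" a] by auto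
      then have "{l\<in>P. sig s' l = a} \<noteq> {}" unfolding P_def by auto
      then show ?thesis unfolding h_def P_def by (simp add: Suc_le_eq card_gt_0_iff)
    qed
    have hs: "(\<Sum>a\<in>A. h a) = card A + m"
      unfolding h_def using card_sum_groups[of P A "sig s'"] img[OF bs' cz'] assms
      unfolding P_def A_def k_def by simp
    have qb: "(\<Sum>a\<in>A. \<Sum>b\<in>A. real (h a) * real (h b) * Kq q a b) \<le>
         (\<Sum>a\<in>A. \<Sum>b\<in>A. real (if a = c then 1 + m else 1) * real (if b = c then 1 + m else 1) * Kq q a b)"
    proof (rule quad_bound)
      show "finite A" unfolding A_def by simp
      show "c \<in> A" unfolding A_def using ck by simp
      show "Kq q a b = Kq q b a" for a b by (rule Kq_sym)
      show "0 \<le> Kq q a b \<and> Kq q a b \<le> 1" for a b using Kq_bounds q0 q1 by blast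
      show "Kq q c c = 1" by (rule Kq_diag)
      show "(\<Sum>b\<in>A. Kq q a b) \<le> (\<Sum>b\<in>A. Kq q c b)" if "a \<in> A" for a
        using phi_max[OF q0 q1, of a k] that unfolding A_def c_def by simp
      show "1 \<le> h a" if "a \<in> A" for a using h1 that .
      show "(\<Sum>a\<in>A. h a) = card A + m" by (rule hs)
    qed
    have "real T * avgAge N T s' \<le> real T * avgAge N T s"
      using avg_formula[OF bs' assms(1)] avg_formula[OF bs assms(1)] reg' reg2 qb
      unfolding P_def q_def by simp
    then show ?thesis using assms(2) by simp
  qed
  show ?thesis using cbs cz ab opt by blast
qed

end
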